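(* Let $A=[1,1,\dots,1]\in\mathbb R^{1\times N}$, $\vec w\in\mathbb R^N$ with $\sum_{i=1}^N w_i>0$, $b=A\vec w$, and let $(\vec x,(\lambda_i)_{i=1}^N,\gamma)$ satisfy the KKT conditions $x_i-w_i+\gamma-\lambda_i=0$, $\lambda_ix_i=0$, $\lambda_i\ge0$, $x_i\ge0$ ($i=1,\dots,N$), $\sum_{i=1}^Nx_i=b$ of the problem $\min_{\vec x\in\mathbb R^N}\frac12\|\vec x-\vec w\|_2^2$ subject to $A\vec x=b$, $x_i\ge0$. Let $B=\{j:x_j=0\}$ and let $\#B$ be its cardinality. Then: (i) for all $i\in B$ (i.e. $x_i=0$), $\lambda_i-\frac1N\sum_{j\in B}\lambda_j=-w_i$; (ii) for all $i$ with $x_i>0$, $x_i=w_i+\frac{1}{N-\#B}\sum_{j\in B}w_j$. *)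

theory Defs
  imports Complex_Main
begin

end

theory Submission
  imports Defs
begin

theorem lemma3:
  fixes N :: nat and w x lambda :: "nat \<Rightarrow> real" and gamma b :: real
  assumes wpos: "(\<Sum>i=1..N. w i) > 0"
    and b_def: "b = (\<Sum>i=1..N. w i)"
    and stat: "\<forall>i\<in>{1..N}. x i - w i + gamma - lambda i = 0"
    and compl: "\<forall>i\<in>{1..N}. lambda i * x i = 0"
    and lam_nonneg: "\<forall>i\<in>{1..N}. lambda i \<ge> 0"
    and x_nonneg: "\<forall>i\<in>{1..N}. x i \<ge> 0"
    and feas: "(\<Sum>i=1..N. x i) = b"
  defines "B \<equiv> {j\<in>{1..N}. x j = 0}"
  shows "(\<forall>i\<in>B. lambda i - (1 / real N) * (\<Sum>j\<in>B. lambda j) = - w i)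
       \<and> (\<forall>i\<in>{1..N}. x i > 0 \<longrightarrow>
            x i = w i + (1 / (real N - real (card B))) * (\<Sum>j\<in>B. w j))"
proof -
  define C where "C = {1..N} - B"
  have BC: "B \<subseteq> {1..N}" "finite B" "finite C" "B \<inter> C = {}" "{1..N} = B \<union> C"
    unfolding B_def C_def by auto
  have lamC: "\<And>j. j \<in> C \<Longrightarrow> lambda j = 0"
    using compl unfolding C_def B_def by auto
  have xC: "\<And>j. j \<in> C \<Longrightarrow> x j = w j - gamma"
    using stat lamC unfolding C_def by force
  have N0: "N > 0" using wpos by (cases N) auto
  have S1: "(\<Sum>i=1..N. lambda i) = (\<Sum>j\<in>B. lambda j)"
    using BC lamC by (simp add: sum.union_disjoint)
  have "(\<Sum>i=1..N. x i - w i + gamma - lambda i) = 0" using stat by simp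
  hence "(\<Sum>i=1..N. x i) - (\<Sum>i=1..N. w i) + real N * gamma - (\<Sum>i=1..N. lambda i) = 0"
    by (simp add: sum.distrib sum_subtractf)
  hence G: "real N * gamma = (\<Sum>j\<in>B. lambda j)" using feas b_def S1 by simp
  have gam: "gamma = (1 / real N) * (\<Sum>j\<in>B. lambda j)" using G N0 by (simp add: field_simps)
  have P1: "\<forall>i\<in>B. lambda i - (1 / real N) * (\<Sum>j\<in>B. lambda j) = - w i"
  proof
    fix i assume "i \<in> B"
    then have "i \<in> {1..N}" "x i = 0" unfolding B_def by auto
    then show "lambda i - (1 / real N) * (\<Sum>j\<in>B. lambda j) = - w i"
      using stat gam by force
  qed
  have P2: "\<forall>i\<in>{1..N}. x i > 0 \<longrightarrow>
            x i = w i + (1 / (real N - real (card B))) * (\<Sum>j\<in>B. w j)"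
  proof (intro ballI impI)
    fix i assume i: "i \<in> {1..N}" "x i > 0"
    then have iC: "i \<in> C" unfolding C_def B_def by auto
    have cardC: "real (card C) = real N - real (card B)"
    proof -
      have "card {1..N} = card B + card C" using BC card_Un_disjoint by metis
      then show ?thesis by simp
    qed
    have cpos: "card C > 0" using iC BC card_gt_0_iff by blast
    have "(\<Sum>i=1..N. x i) = (\<Sum>j\<in>B. x j) + (\<Sum>j\<in>C. x j)"
      using BC by (simp add: sum.union_disjoint)
    also have "(\<Sum>j\<in>B. x j) = 0" unfolding B_def by simp
    also have "(\<Sum>j\<in>C. x j) = (\<Sum>j\<in>C. w j) - real (card C) * gamma"
      using xC by (simp add: sum_subtractf)
    finally have e1: "(\<Sum>i=1..N. x i) = (\<Sum>j\<in>C. w j) - real (card C) * gamma" by simp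
    have e2: "(\<Sum>i=1..N. w i) = (\<Sum>j\<in>B. w j) + (\<Sum>j\<in>C. w j)"
      using BC by (simp add: sum.union_disjoint)
    have "real (card C) * gamma = - (\<Sum>j\<in>B. w j)" using e1 e2 feas b_def by simp
    hence "gamma = - (1 / real (card C)) * (\<Sum>j\<in>B. w j)" using cpos
      by (simp add: field_simps)
    thus "x i = w i + (1 / (real N - real (card B))) * (\<Sum>j\<in>B. w j)"
      using xC[OF iC] cardC by simp
  qed
  show ?thesis using P1 P2 by blast
qed

end
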